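(* Let $\mathcal C$ and $\mathcal D$ be simplifiable hyperoctahedral categories of partitions, and let $\mathcal C_{sl}$, $\mathcal D_{sl}$ denote the sets of partitions in $\mathcal C$, resp. $\mathcal D$, that are in single leg form. Then: (a) $\langle\mathcal C_{sl},\rho\rangle=\mathcal C$; (b) $\mathcal C_{sl}=\mathcal D_{sl}$ if and only if $\mathcal C=\mathcal D$; (c) $\mathcal C_{sl}\subseteq\mathcal D_{sl}$ if and only if $\mathcal C\subseteq\mathcal D$.
   Context: A partition $p\in P(k,l)$ ($k,l\ge 0$) is a partition of the disjoint union of $k$ ordered upper points $1,\dots,k$ and $l$ ordered lower points $1',\dots,l'$ into nonempty disjoint subsets called blocks; $P=\bigcup_{k,l}P(k,l)$. Operations on partitions: the tensor product $p\otimes q$ (horizontal juxtaposition, $q$ placed to the right of $p$); the composition of $p\in P(k,l)$ with $q\in P(l,m)$ (stack $p$ on top of $q$, identify the lower points of $p$ with the upper points of $q$, merge blocks connected through these middle points, then erase the middle points and any block lying entirely among them), giving a partition in $P(k,m)$; the involution $p^*$ (reflection of $p$ upside down); and rotation (moving the leftmost, resp. rightmost, point of one row to the leftmost, resp. rightmost, position of the other row, keeping the blocks). A category of partitions is a subset $\mathcal C\subseteq P$ containing the pair partition $\sqcap\in P(0,2)$ (one block consisting of two lower points) and the identity partition $|\in P(1,1)$ (one block $\{1,1'\}$), and closed under these four operations. $\langle \mathcal X,p\rangle$ denotes the smallest category containing the set $\mathcal X$ and the partition $p$. Special partitions: the four block $b_4\in P(0,4)$ (one block of four lower points); the double singleton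 $\uparrow\otimes\uparrow\in P(0,2)$ (two one-point blocks); the pair positioner $\rho\in P(3,3)$ with blocks $\{1,2,2',3'\}$ and $\{3,1'\}$. A category of partitions $\mathcal C$ is hyperoctahedral if $b_4\in\mathcal C$ and $\uparrow\otimes\uparrow\notin\mathcal C$; it is simplifiable hyperoctahedral if moreover $\rho\in\mathcal C$. Reading a partition as a word: label the blocks of $p$ by pairwise distinct letters and read the labels of the points starting at the leftmost upper point, going through the upper row from left to right and then through the lower row from right to left. A partition is in single leg form if in this word no two consecutive letters are equal (i.e. no two consecutive points in this reading order belong to the same block). *)

theory Defs
  imports Main
begin

text \<open>Points: upper points U 0, ..., U (k-1) (i.e. 1,...,k) and lower points
  L 0, ..., L (l-1) (i.e. 1',...,l').  A partition in P(k,l) is represented by the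
  equivalence relation "lies in the same block" on the point set; its blocks are
  the equivalence classes.\<close>

datatype pt = U nat | L nat

datatype part = Part nat nat "(pt \<times> pt) set"

definition points :: "nat \<Rightarrow> nat \<Rightarrow> pt set" where
  "points k l = U ` {..<k} \<union> L ` {..<l}"

fun up :: "part \<Rightarrow> nat" where "up (Part k l r) = k"
fun lo :: "part \<Rightarrow> nat" where "lo (Part k l r) = l"
fun rel :: "part \<Rightarrow> (pt \<times> pt) set" where "rel (Part k l r) = r"

definition Pkl :: "nat \<Rightarrow> nat \<Rightarrow> part set" where
  "Pkl k l = {Part k l r | r. equiv (points k l) r}"

definition Pall :: "part set" where
  "Pall = (\<Union>k l. Pkl k l)"

definition of_blocks :: "nat \<Rightarrow> nat \<Rightarrow> pt set set \<Rightarrow> part" where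
  "of_blocks k l B = Part k l (\<Union>b\<in>B. b \<times> b)"

definition map_rel :: "('a \<Rightarrow> 'b) \<Rightarrow> ('a \<times> 'a) set \<Rightarrow> ('b \<times> 'b) set" where
  "map_rel f r = (\<lambda>(a, b). (f a, f b)) ` r"

fun shift_pt :: "nat \<Rightarrow> nat \<Rightarrow> pt \<Rightarrow> pt" where
  "shift_pt k l (U i) = U (i + k)"
| "shift_pt k l (L j) = L (j + l)"

fun tensor :: "part \<Rightarrow> part \<Rightarrow> part" where
  "tensor (Part k l r) (Part k' l' r') =
     Part (k + k') (l + l') (r \<union> map_rel (shift_pt k l) r')"

fun flip_pt :: "pt \<Rightarrow> pt" where
  "flip_pt (U i) = L i"
| "flip_pt (L j) = U j"

fun involution :: "part \<Rightarrow> part" where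
  "involution (Part k l r) = Part l k (map_rel flip_pt r)"

text \<open>Composition: p on top of q; points of the stacked picture.\<close>
datatype cpt = CU nat | CM nat | CL nat

fun top_pt :: "pt \<Rightarrow> cpt" where
  "top_pt (U i) = CU i"
| "top_pt (L j) = CM j"

fun bot_pt :: "pt \<Rightarrow> cpt" where
  "bot_pt (U j) = CM j"
| "bot_pt (L j) = CL j"

fun out_pt :: "pt \<Rightarrow> cpt" where
  "out_pt (U i) = CU i"
| "out_pt (L j) = CL j"

text \<open>compose p q (for p in P(k,l), q in P(l,m)) is in P(k,m): blocks connected through
  the middle points are merged (transitive closure), then middle points are erased.\<close>
fun compose :: "part \<Rightarrow> part \<Rightarrow> part" where
  "compose (Part k l r) (Part l' m s) =
     Part k m {(a, b). a \<in> points k m \<and> b \<in> points k m \<and>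
        (out_pt a, out_pt b) \<in> (map_rel top_pt r \<union> map_rel bot_pt s)\<^sup>*}"

fun rotLU_pt :: "pt \<Rightarrow> pt" where
  "rotLU_pt (U i) = (if i = 0 then L 0 else U (i - 1))"
| "rotLU_pt (L j) = L (j + 1)"

fun rotLL_pt :: "pt \<Rightarrow> pt" where
  "rotLL_pt (L j) = (if j = 0 then U 0 else L (j - 1))"
| "rotLL_pt (U i) = U (i + 1)"

fun rotRU_pt :: "nat \<Rightarrow> nat \<Rightarrow> pt \<Rightarrow> pt" where
  "rotRU_pt k l (U i) = (if i = k - 1 then L l else U i)"
| "rotRU_pt k l (L j) = L j"

fun rotRL_pt :: "nat \<Rightarrow> nat \<Rightarrow> pt \<Rightarrow> pt" where
  "rotRL_pt k l (L j) = (if j = l - 1 then U k else L j)"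
| "rotRL_pt k l (U i) = U i"

fun rotLU :: "part \<Rightarrow> part" where
  "rotLU (Part k l r) = Part (k - 1) (l + 1) (map_rel rotLU_pt r)"
fun rotLL :: "part \<Rightarrow> part" where
  "rotLL (Part k l r) = Part (k + 1) (l - 1) (map_rel rotLL_pt r)"
fun rotRU :: "part \<Rightarrow> part" where
  "rotRU (Part k l r) = Part (k - 1) (l + 1) (map_rel (rotRU_pt k l) r)"
fun rotRL :: "part \<Rightarrow> part" where
  "rotRL (Part k l r) = Part (k + 1) (l - 1) (map_rel (rotRL_pt k l) r)"

definition pair_part :: part where
  "pair_part = of_blocks 0 2 {{L 0, L 1}}"

definition id_part :: part where
  "id_part = of_blocks 1 1 {{U 0, L 0}}"

definition four_block :: part where
  "four_block = of_blocks 0 4 {{L 0, L 1, L 2, L 3}}"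

definition double_singleton :: part where
  "double_singleton = of_blocks 0 2 {{L 0}, {L 1}}"

definition pair_positioner :: part where
  "pair_positioner = of_blocks 3 3 {{U 0, U 1, L 1, L 2}, {U 2, L 0}}"

definition category :: "part set \<Rightarrow> bool" where
  "category C \<longleftrightarrow> C \<subseteq> Pall \<and> pair_part \<in> C \<and> id_part \<in> C \<and>
     (\<forall>p\<in>C. \<forall>q\<in>C. tensor p q \<in> C) \<and>
     (\<forall>p\<in>C. \<forall>q\<in>C. lo p = up q \<longrightarrow> compose p q \<in> C) \<and>
     (\<forall>p\<in>C. involution p \<in> C) \<and>
     (\<forall>p\<in>C. up p \<ge> 1 \<longrightarrow> rotLU p \<in> C \<and> rotRU p \<in> C) \<and>
     (\<forall>p\<in>C. lo p \<ge> 1 \<longrightarrow> rotLL p \<in> C \<and> rotRL p \<in> C)"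

definition generated :: "part set \<Rightarrow> part \<Rightarrow> part set" where
  "generated X p = \<Inter> {D. category D \<and> X \<subseteq> D \<and> p \<in> D}"

definition hyperoctahedral :: "part set \<Rightarrow> bool" where
  "hyperoctahedral C \<longleftrightarrow> category C \<and> four_block \<in> C \<and> double_singleton \<notin> C"

definition simplifiable_hyperoctahedral :: "part set \<Rightarrow> bool" where
  "simplifiable_hyperoctahedral C \<longleftrightarrow> hyperoctahedral C \<and> pair_positioner \<in> C"

definition reading :: "nat \<Rightarrow> nat \<Rightarrow> pt list" where
  "reading k l = map U [0..<k] @ map L (rev [0..<l])"

fun single_leg :: "part \<Rightarrow> bool" where
  "single_leg (Part k l r) \<longleftrightarrow>
     (\<forall>i. Suc i < length (reading k l) \<longrightarrow>
        (reading k l ! i, reading k l ! Suc i) \<notin> r)"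

definition sl_part :: "part set \<Rightarrow> part set" where
  "sl_part C = {p \<in> C. single_leg p}"

end

theory Submission
  imports Defs
begin

lemma Pall_equiv: "Part k l r \<in> Pall \<Longrightarrow> equiv (points k l) r"
  by (auto simp: Pall_def Pkl_def)

lemma points0: "points 0 m = L ` {..<m}" by (simp add: points_def)

definition relab :: "nat \<Rightarrow> (nat \<Rightarrow> nat) \<Rightarrow> (pt \<times> pt) set \<Rightarrow> part" where
  "relab m f r = Part 0 m {(L a, L b) | a b. a < m \<and> b < m \<and> (L (f a), L (f b)) \<in> r}"

fun psi :: "(nat \<Rightarrow> nat) \<Rightarrow> pt \<Rightarrow> pt" where
  "psi f (U u) = L u" | "psi f (L c) = L (f c)"

fun chi :: "(nat \<Rightarrow> nat) \<Rightarrow> cpt \<Rightarrow> pt" where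
  "chi f (CU i) = L 0" | "chi f (CM u) = L u" | "chi f (CL c) = L (f c)"

lemma chi_bot: "chi f (bot_pt p) = psi f p" by (cases p) auto

lemma compose_relab:
  assumes r: "equiv (points 0 n) r" and s_sym: "sym s"
  and f: "\<forall>c<m. f c < n \<and> (U (f c), L c) \<in> s"
  and edges: "\<forall>(x,y)\<in>s. (psi f x, psi f y) \<in> r"
  shows "compose (Part 0 n r) (Part n m s) = relab m f r"
proof -
  let ?E = "map_rel top_pt r \<union> map_rel bot_pt s"
  have rsub: "r \<subseteq> points 0 n \<times> points 0 n" using r by (rule equiv_type)
  have rtr: "trans r" and rsy: "sym r" using r by (auto simp: equiv_def)
  have chitop: "chi f (top_pt p) = p" if "p \<in> points 0 n" for p
    using that by (auto simp: points0)
  have edge: "(chi f y, chi f z) \<in> r" if "(y, z) \<in> ?E" for y z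
  proof -
    from that consider (t) p p' where "(p,p') \<in> r" "y = top_pt p" "z = top_pt p'"
      | (b) p p' where "(p,p') \<in> s" "y = bot_pt p" "z = bot_pt p'"
      by (auto simp: map_rel_def)
    then show ?thesis
    proof cases
      case t then show ?thesis using rsub chitop by auto
    next
      case b then show ?thesis using edges by (auto simp: chi_bot)
    qed
  qed
  have sound: "x = y \<or> (chi f x, chi f y) \<in> r" if "(x, y) \<in> ?E\<^sup>*" for x y
    using that
  proof (induction rule: rtrancl_induct)
    case base then show ?case by simp
  next
    case (step y z)
    then show ?case using edge[of y z] rtr by (auto dest: transD)
  qed
  have rrefl: "(L c, L c) \<in> r" if "c < n" for c
    using r that by (auto simp: equiv_def refl_on_def points0)
  have "{(a, b). a \<in> points 0 m \<and> b \<in> points 0 m \<and> (out_pt a, out_pt b) \<in> ?E\<^sup>*}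
        = {(L a, L b) | a b. a < m \<and> b < m \<and> (L (f a), L (f b)) \<in> r}"
  proof (intro set_eqI iffI)
    fix xy assume "xy \<in> {(a, b). a \<in> points 0 m \<and> b \<in> points 0 m \<and> (out_pt a, out_pt b) \<in> ?E\<^sup>*}"
    then obtain a b where xy: "xy = (L a, L b)" "a < m" "b < m" "(CL a, CL b) \<in> ?E\<^sup>*"
      by (auto simp: points0)
    from sound[OF xy(4)] have "a = b \<or> (L (f a), L (f b)) \<in> r" by auto
    then show "xy \<in> {(L a, L b) | a b. a < m \<and> b < m \<and> (L (f a), L (f b)) \<in> r}"
      using xy f rrefl by auto
  next
    fix xy assume "xy \<in> {(L a, L b) | a b. a < m \<and> b < m \<and> (L (f a), L (f b)) \<in> r}"
    then obtain a b where xy: "xy = (L a, L b)" "a < m" "b < m" "(L (f a), L (f b)) \<in> r"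
      by auto
    have e1: "(CL a, CM (f a)) \<in> ?E"
    proof -
      have "(L a, U (f a)) \<in> s" using f xy s_sym by (auto dest: symD)
      then show ?thesis unfolding map_rel_def by (force)
    qed
    have e2: "(CM (f a), CM (f b)) \<in> ?E"
      using xy(4) unfolding map_rel_def by force
    have e3: "(CM (f b), CL b) \<in> ?E"
    proof -
      have "(U (f b), L b) \<in> s" using f xy by auto
      then show ?thesis unfolding map_rel_def by (force)
    qed
    have "(CL a, CL b) \<in> ?E\<^sup>*" using e1 e2 e3
      by (meson converse_rtrancl_into_rtrancl r_into_rtrancl)
    then show "xy \<in> {(a, b). a \<in> points 0 m \<and> b \<in> points 0 m \<and> (out_pt a, out_pt b) \<in> ?E\<^sup>*}"
      using xy by (auto simp: points0)
  qed
  then show ?thesis by (simp add: relab_def)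
qed


lemma catD:
  assumes "category D"
  shows "D \<subseteq> Pall" "pair_part \<in> D" "id_part \<in> D"
    "p \<in> D \<Longrightarrow> q \<in> D \<Longrightarrow> tensor p q \<in> D"
    "p \<in> D \<Longrightarrow> q \<in> D \<Longrightarrow> lo p = up q \<Longrightarrow> compose p q \<in> D"
    "p \<in> D \<Longrightarrow> involution p \<in> D"
    "p \<in> D \<Longrightarrow> up p \<ge> 1 \<Longrightarrow> rotRU p \<in> D"
    "p \<in> D \<Longrightarrow> lo p \<ge> 1 \<Longrightarrow> rotRL p \<in> D"
    "p \<in> D \<Longrightarrow> up p \<ge> 1 \<Longrightarrow> rotLU p \<in> D"
    "p \<in> D \<Longrightarrow> lo p \<ge> 1 \<Longrightarrow> rotLL p \<in> D"
  using assms unfolding category_def by auto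

lemma cat_equiv: "category D \<Longrightarrow> Part k l r \<in> D \<Longrightarrow> equiv (points k l) r"
  using catD(1) Pall_equiv by blast

lemma empty_in: assumes "category D" shows "Part 0 0 {} \<in> D"
proof -
  have p: "pair_part \<in> D" and i: "involution pair_part \<in> D" using catD[OF assms] by auto
  have "lo pair_part = up (involution pair_part)" by (simp add: pair_part_def of_blocks_def)
  then have "compose pair_part (involution pair_part) \<in> D"
    using catD(5)[OF assms p i] by simp
  moreover have "compose pair_part (involution pair_part) = Part 0 0 {}"
    by (simp add: pair_part_def of_blocks_def points_def)
  ultimately show ?thesis by simp
qed

fun idn :: "nat \<Rightarrow> part" where
  "idn 0 = Part 0 0 {}" | "idn (Suc a) = tensor (idn a) id_part"

definition idrel :: "nat \<Rightarrow> (pt \<times> pt) set" where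
  "idrel a = {(x,y). \<exists>i<a. x \<in> {U i, L i} \<and> y \<in> {U i, L i}}"

lemma idn_eq: "idn a = Part a a (idrel a)"
proof (induction a)
  case 0 then show ?case by (simp add: idrel_def)
next
  case (Suc a)
  have "idrel a \<union> map_rel (shift_pt a a) ({U 0, L 0} \<times> {U 0, L 0}) = idrel (Suc a)"
    by (auto simp: idrel_def map_rel_def less_Suc_eq)
  then show ?case using Suc by (simp add: id_part_def of_blocks_def)
qed

lemma idn_in: "category D \<Longrightarrow> idn a \<in> D"
  by (induction a) (auto intro: empty_in catD)

fun psiX :: "nat \<Rightarrow> (nat \<Rightarrow> nat) \<Rightarrow> pt \<Rightarrow> pt" where
  "psiX a g (U u) = L (a + u)" | "psiX a g (L t) = L (a + g t)"

definition opf :: "nat \<Rightarrow> nat \<Rightarrow> nat \<Rightarrow> (nat \<Rightarrow> nat) \<Rightarrow> nat \<Rightarrow> nat" where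
  "opf a kx mx g c = (if c < a then c else if c < a + mx then a + g (c - a) else c + kx - mx)"

lemma op_gen:
  assumes D: "category D" and q: "Part 0 n r \<in> D" and X: "Part kx mx sx \<in> D"
    and n: "n = a + kx + b"
    and g: "\<forall>t<mx. g t < kx \<and> (U (g t), L t) \<in> sx"
    and edges: "\<forall>(x,y)\<in>sx. (psiX a g x, psiX a g y) \<in> r"
  shows "relab (a + mx + b) (opf a kx mx g) r \<in> D"
proof -
  let ?s = "idrel a \<union> map_rel (shift_pt a a) sx \<union> map_rel (shift_pt (a + kx) (a + mx)) (idrel b)"
  let ?M = "tensor (tensor (idn a) (Part kx mx sx)) (idn b)"
  have M: "?M = Part n (a + mx + b) ?s" by (simp add: idn_eq n)
  have MD: "?M \<in> D" using D X by (auto intro: catD idn_in)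
  have req: "equiv (points 0 n) r" using cat_equiv[OF D q] .
  have seq: "equiv (points n (a+mx+b)) ?s" using cat_equiv[OF D] MD M by simp
  have sxeq: "equiv (points kx mx) sx" using cat_equiv[OF D X] .
  have rrefl: "(L c, L c) \<in> r" if "c < n" for c
    using req that by (auto simp: equiv_def refl_on_def points0)
  have "compose (Part 0 n r) ?M = relab (a + mx + b) (opf a kx mx g) r"
    unfolding M
  proof (rule compose_relab[OF req])
    show "sym ?s" using seq by (simp add: equiv_def)
    show "\<forall>c<a + mx + b. opf a kx mx g c < n \<and> (U (opf a kx mx g c), L c) \<in> ?s"
    proof (intro allI impI)
      fix c assume c: "c < a + mx + b"
      consider "c < a" | "a \<le> c" "c < a + mx" | "a + mx \<le> c" by linarith
      then show "opf a kx mx g c < n \<and> (U (opf a kx mx g c), L c) \<in> ?s"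
      proof cases
        case 1 then show ?thesis by (auto simp: opf_def n idrel_def)
      next
        case 2
        then have "g (c - a) < kx" "(U (g (c-a)), L (c - a)) \<in> sx" using g by auto
        moreover have "(U (a + g (c - a)), L c) \<in> map_rel (shift_pt a a) sx"
          unfolding map_rel_def
          by (rule image_eqI[of _ _ "(U (g (c-a)), L (c-a))"]) (use 2 g in auto)
        ultimately show ?thesis using 2 by (auto simp: opf_def n)
      next
        case 3
        have "(U (c - a - mx), L (c - a - mx)) \<in> idrel b" using 3 c by (auto simp: idrel_def)
        then have "(U (c + kx - mx), L c) \<in> map_rel (shift_pt (a + kx) (a + mx)) (idrel b)"
          unfolding map_rel_def
          by (intro image_eqI[of _ _ "(U (c - a - mx), L (c - a - mx))"]) (use 3 in auto)
        then show ?thesis using 3 c by (auto simp: opf_def n)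
      qed
    qed
    show "\<forall>(x,y)\<in>?s. (psi (opf a kx mx g) x, psi (opf a kx mx g) y) \<in> r"
    proof (intro ballI)
      fix xy assume xy: "xy \<in> ?s"
      obtain x y where xy': "xy = (x, y)" by force
      have "(psi (opf a kx mx g) x, psi (opf a kx mx g) y) \<in> r"
      proof -
        consider "(x,y) \<in> idrel a" | "(x,y) \<in> map_rel (shift_pt a a) sx"
          | "(x,y) \<in> map_rel (shift_pt (a + kx) (a + mx)) (idrel b)" using xy xy' by auto
        then show ?thesis
        proof cases
          case 1
          then obtain i where "i < a" "x \<in> {U i, L i}" "y \<in> {U i, L i}" by (auto simp: idrel_def)
          then show ?thesis using rrefl[of i] n by (auto simp: opf_def)
        next
          case 2
          then obtain x0 y0 where e: "(x0, y0) \<in> sx" "x = shift_pt a a x0" "y = shift_pt a a y0"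
            by (auto simp: map_rel_def)
          have inp: "x0 \<in> points kx mx" "y0 \<in> points kx mx" using e(1) equiv_type[OF sxeq] by auto
          have "psi (opf a kx mx g) (shift_pt a a z) = psiX a g z" if "z \<in> points kx mx" for z
            using that by (auto simp: points_def opf_def)
          then show ?thesis using e inp edges by auto
        next
          case 3
          then obtain i where "i < b" "x \<in> {U (i + (a+kx)), L (i + (a+mx))}" "y \<in> {U (i + (a+kx)), L (i + (a+mx))}"
            by (auto simp: idrel_def map_rel_def)
          then show ?thesis using rrefl[of "i + (a + kx)"] n by (auto simp: opf_def)
        qed
      qed
      then show "case xy of (x,y) \<Rightarrow> (psi (opf a kx mx g) x, psi (opf a kx mx g) y) \<in> r"
        using xy' by simp
    qed
  qed
  moreover have "compose (Part 0 n r) ?M \<in> D"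
    using catD(5)[OF D q MD] M by simp
  ultimately show ?thesis by simp
qed


definition relrel :: "nat \<Rightarrow> (nat \<Rightarrow> nat) \<Rightarrow> (pt \<times> pt) set \<Rightarrow> (pt \<times> pt) set" where
  "relrel m f r = {(L a, L b) | a b. a < m \<and> b < m \<and> (L (f a), L (f b)) \<in> r}"

lemma relab_rr: "relab m f r = Part 0 m (relrel m f r)"
  by (simp add: relab_def relrel_def)

lemma relab_cong: "(\<And>c. c < m \<Longrightarrow> f c = g c) \<Longrightarrow> relab m f r = relab m g r"
  unfolding relab_def by (rule arg_cong[where f="Part 0 m"]) auto

lemma relab_relab: "(\<And>c. c < m \<Longrightarrow> f c < n) \<Longrightarrow> relab m f (relrel n g r) = relab m (g \<circ> f) r"
  unfolding relab_def relrel_def by (rule arg_cong[where f="Part 0 m"]) auto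

lemma relab_id:
  assumes r: "equiv (points 0 n) r" and h: "\<And>c. c < n \<Longrightarrow> h c < n \<and> (L c, L (h c)) \<in> r"
  shows "relab n h r = Part 0 n r"
  unfolding relab_def
proof (rule arg_cong[where f="Part 0 n"], intro set_eqI iffI)
  have sub: "r \<subseteq> points 0 n \<times> points 0 n" using equiv_type[OF r] .
  have tr: "trans r" and sy: "sym r" using r by (auto simp: equiv_def)
  fix xy
  assume "xy \<in> {(L a, L b) |a b. a < n \<and> b < n \<and> (L (h a), L (h b)) \<in> r}"
  then obtain a b where "xy = (L a, L b)" "a < n" "b < n" "(L (h a), L (h b)) \<in> r" by auto
  then show "xy \<in> r" using h[of a] h[of b] tr sy by (meson symD transD)
next
  have sub: "r \<subseteq> points 0 n \<times> points 0 n" using equiv_type[OF r] .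
  have tr: "trans r" and sy: "sym r" using r by (auto simp: equiv_def)
  fix xy assume xy: "xy \<in> r"
  then obtain a b where ab: "xy = (L a, L b)" "a < n" "b < n" using sub by (auto simp: points0)
  then have "(L (h a), L (h b)) \<in> r" using h[of a] h[of b] tr sy xy by (meson symD transD)
  then show "xy \<in> {(L a, L b) |a b. a < n \<and> b < n \<and> (L (h a), L (h b)) \<in> r}" using ab by auto
qed

lemma rrefl: "equiv (points 0 n) r \<Longrightarrow> c < n \<Longrightarrow> (L c, L c) \<in> r"
  by (auto simp: equiv_def refl_on_def points0)

lemma rsym: "equiv A r \<Longrightarrow> (x, y) \<in> r \<Longrightarrow> (y, x) \<in> r"
  by (auto simp: equiv_def dest: symD)

lemma op_cap:
  assumes D: "category D" and q: "Part 0 n r \<in> D" and a: "a + 1 < n" and e: "(L a, L (a+1)) \<in> r"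
  shows "relab (n - 2) (\<lambda>c. if c < a then c else c + 2) r \<in> D"
proof -
  have req: "equiv (points 0 n) r" using cat_equiv[OF D q] .
  have X: "Part 2 0 (map_rel flip_pt ({L 0, L 1} \<times> {L 0, L 1})) \<in> D"
    using catD(6)[OF D catD(2)[OF D]] by (simp add: pair_part_def of_blocks_def)
  have "relab (a + 0 + (n - 2 - a)) (opf a 2 0 (\<lambda>_. 0)) r \<in> D"
    apply (rule op_gen[OF D q X])
    using a e rrefl[OF req, of a] rrefl[OF req, of "a+1"] rsym[OF req e]
    by (auto simp: map_rel_def)
  moreover have "relab (a + 0 + (n - 2 - a)) (opf a 2 0 (\<lambda>_. 0)) r = relab (n - 2) (\<lambda>c. if c < a then c else c + 2) r"
    using a by (auto intro!: relab_cong simp: opf_def)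
  ultimately show ?thesis by simp
qed

lemma op_mvR:
  assumes D: "category D" and rho: "pair_positioner \<in> D" and q: "Part 0 n r \<in> D"
    and a: "a + 2 < n" and e: "(L a, L (a+1)) \<in> r"
  shows "relab n (\<lambda>c. if c = a then a + 2 else if c = a + 1 \<or> c = a + 2 then a else c) r \<in> D"
proof -
  have req: "equiv (points 0 n) r" using cat_equiv[OF D q] .
  have X: "Part 3 3 ({U 0, U 1, L 1, L 2} \<times> {U 0, U 1, L 1, L 2} \<union> {U 2, L 0} \<times> {U 2, L 0}) \<in> D"
    using rho by (simp add: pair_positioner_def of_blocks_def)
  have "relab (a + 3 + (n - 3 - a)) (opf a 3 3 (\<lambda>t. if t = 0 then 2 else 0)) r \<in> D"
    apply (rule op_gen[OF D q X])
    using a e rrefl[OF req, of a] rrefl[OF req, of "a+1"] rrefl[OF req, of "a+2"] rsym[OF req e]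
    by auto
  moreover have "relab (a + 3 + (n - 3 - a)) (opf a 3 3 (\<lambda>t. if t = 0 then 2 else 0)) r
     = relab n (\<lambda>c. if c = a then a + 2 else if c = a + 1 \<or> c = a + 2 then a else c) r"
    using a by (auto intro!: relab_cong simp: opf_def)
  ultimately show ?thesis by simp
qed

lemma op_mvL:
  assumes D: "category D" and rho: "pair_positioner \<in> D" and q: "Part 0 n r \<in> D"
    and a: "a + 2 < n" and e: "(L (a+1), L (a+2)) \<in> r"
  shows "relab n (\<lambda>c. if c = a \<or> c = a + 1 then a + 1 else if c = a + 2 then a else c) r \<in> D"
proof -
  have req: "equiv (points 0 n) r" using cat_equiv[OF D q] .
  have X: "Part 3 3 (map_rel flip_pt ({U 0, U 1, L 1, L 2} \<times> {U 0, U 1, L 1, L 2} \<union> {U 2, L 0} \<times> {U 2, L 0})) \<in> D"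
    using catD(6)[OF D rho] by (simp add: pair_positioner_def of_blocks_def)
  have "relab (a + 3 + (n - 3 - a)) (opf a 3 3 (\<lambda>t. if t = 2 then 0 else 1)) r \<in> D"
    apply (rule op_gen[OF D q X])
    using a e rrefl[OF req, of a] rrefl[OF req, of "a+1"] rrefl[OF req, of "a+2"] rsym[OF req e]
    by (auto simp: map_rel_def)
  moreover have "relab (a + 3 + (n - 3 - a)) (opf a 3 3 (\<lambda>t. if t = 2 then 0 else 1)) r
     = relab n (\<lambda>c. if c = a \<or> c = a + 1 then a + 1 else if c = a + 2 then a else c) r"
    using a by (auto intro!: relab_cong simp: opf_def)
  ultimately show ?thesis by simp
qed


definition Tpart :: part where
  "Tpart = Part 1 3 ({U 0, L 0, L 1, L 2} \<times> {U 0, L 0, L 1, L 2})"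

lemma T_in:
  assumes D: "category D" and rho: "pair_positioner \<in> D"
  shows "Tpart \<in> D"
proof -
  have t: "tensor id_part pair_part \<in> D" using catD[OF D] by auto
  have c: "compose (tensor id_part pair_part) pair_positioner \<in> D"
    using catD(5)[OF D t rho]
    by (simp add: id_part_def pair_part_def pair_positioner_def of_blocks_def)
  let ?A = "{U 0, L 0} \<times> {U 0, L 0} \<union> map_rel (shift_pt 1 1) ({L 0, L 1} \<times> {L 0, L 1})"
  let ?R = "{U 0, U 1, L 1, L 2} \<times> {U 0, U 1, L 1, L 2} \<union> {U 2, L 0} \<times> {U 2, L 0}"
  let ?E = "map_rel top_pt ?A \<union> map_rel bot_pt ?R"
  have e1: "(CU 0, CM 0) \<in> ?E" "(CM 0, CU 0) \<in> ?E" unfolding map_rel_def by force+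
  have e2: "(CM 0, CL 1) \<in> ?E" "(CL 1, CM 0) \<in> ?E" "(CM 0, CL 2) \<in> ?E" "(CL 2, CM 0) \<in> ?E"
    "(CM 0, CM 1) \<in> ?E" "(CM 1, CM 0) \<in> ?E" "(CM 2, CL 0) \<in> ?E" "(CL 0, CM 2) \<in> ?E"
    unfolding map_rel_def by force+
  have e3: "(CM 1, CM 2) \<in> ?E" "(CM 2, CM 1) \<in> ?E" unfolding map_rel_def
    by (rule UnI1, rule image_eqI[of _ _ "(L 1, L 2)"], simp, force)
      (rule UnI1, rule image_eqI[of _ _ "(L 2, L 1)"], simp, force)
  have conn: "(CU 0, y) \<in> ?E\<^sup>* \<and> (y, CU 0) \<in> ?E\<^sup>*" if "y \<in> {CU 0, CL 0, CL 1, CL 2}" for y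
  proof -
    have "(CU 0, CL 1) \<in> ?E\<^sup>*" "(CL 1, CU 0) \<in> ?E\<^sup>*" "(CU 0, CL 2) \<in> ?E\<^sup>*" "(CL 2, CU 0) \<in> ?E\<^sup>*"
      using e1 e2 by (meson converse_rtrancl_into_rtrancl r_into_rtrancl)+
    moreover have "(CU 0, CL 0) \<in> ?E\<^sup>*" "(CL 0, CU 0) \<in> ?E\<^sup>*"
      using e1 e2 e3 by (meson converse_rtrancl_into_rtrancl r_into_rtrancl)+
    ultimately show ?thesis using that by auto
  qed
  have "compose (tensor id_part pair_part) pair_positioner = Tpart"
  proof -
    have "compose (tensor id_part pair_part) pair_positioner =
      Part 1 3 {(a, b). a \<in> points 1 3 \<and> b \<in> points 1 3 \<and> (out_pt a, out_pt b) \<in> ?E\<^sup>*}"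
      by (simp add: id_part_def pair_part_def pair_positioner_def of_blocks_def)
    also have "{(a, b). a \<in> points 1 3 \<and> b \<in> points 1 3 \<and> (out_pt a, out_pt b) \<in> ?E\<^sup>*}
       = {U 0, L 0, L 1, L 2} \<times> {U 0, L 0, L 1, L 2}"
    proof -
      have p: "points 1 3 = {U 0, L 0, L 1, L 2}" by (auto simp: points_def)
      have "(out_pt a, out_pt b) \<in> ?E\<^sup>*" if "a \<in> {U 0, L 0, L 1, L 2}" "b \<in> {U 0, L 0, L 1, L 2}" for a b
      proof -
        have "out_pt a \<in> {CU 0, CL 0, CL 1, CL 2}" "out_pt b \<in> {CU 0, CL 0, CL 1, CL 2}" using that by auto
        then show ?thesis using conn by (meson rtrancl_trans)
      qed
      then show ?thesis unfolding p by auto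
    qed
    finally show ?thesis by (simp add: Tpart_def)
  qed
  then show ?thesis using c by simp
qed

lemma op_dbl:
  assumes D: "category D" and rho: "pair_positioner \<in> D" and q: "Part 0 n r \<in> D" and a: "a < n"
  shows "relab (n + 2) (\<lambda>c. if c < a then c else if c < a + 3 then a else c - 2) r \<in> D"
proof -
  have req: "equiv (points 0 n) r" using cat_equiv[OF D q] .
  have X: "Part 1 3 ({U 0, L 0, L 1, L 2} \<times> {U 0, L 0, L 1, L 2}) \<in> D"
    using T_in[OF D rho] by (simp add: Tpart_def)
  have "relab (a + 3 + (n - 1 - a)) (opf a 1 3 (\<lambda>_. 0)) r \<in> D"
    apply (rule op_gen[OF D q X])
    using a rrefl[OF req, of a] by auto
  moreover have "relab (a + 3 + (n - 1 - a)) (opf a 1 3 (\<lambda>_. 0)) r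
     = relab (n + 2) (\<lambda>c. if c < a then c else if c < a + 3 then a else c - 2) r"
    using a by (auto intro!: relab_cong simp: opf_def)
  ultimately show ?thesis by simp
qed


definition hL :: "nat \<Rightarrow> nat \<Rightarrow> nat \<Rightarrow> nat" where
  "hL j d c = (if c < j - d then c else if c \<le> j - d + 1 then j else if c \<le> j + 1 then c - 2 else c)"

definition hR :: "nat \<Rightarrow> nat \<Rightarrow> nat \<Rightarrow> nat" where
  "hR j d c = (if c < j then c else if c < j + d then c + 2 else if c \<le> j + d + 1 then j else c)"

lemma base_id:
  assumes D: "category D" and q: "Part 0 n r \<in> D" and j: "j + 1 < n" and e: "(L j, L (j+1)) \<in> r"
    and h: "\<And>c. h c = (if c < j then c else if c \<le> j + 1 then j else c)"
  shows "relab n h r = Part 0 n r"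
proof -
  have req: "equiv (points 0 n) r" using cat_equiv[OF D q] .
  show ?thesis
    by (rule relab_id[OF req]) (use j rrefl[OF req] rsym[OF req e] in \<open>auto simp: h le_Suc_eq\<close>)
qed

lemma mvL_many:
  assumes D: "category D" and rho: "pair_positioner \<in> D" and q: "Part 0 n r \<in> D"
    and j: "j + 1 < n" and e: "(L j, L (j+1)) \<in> r"
  shows "d \<le> j \<Longrightarrow> relab n (hL j d) r \<in> D"
proof (induction d)
  case 0
  have "relab n (hL j 0) r = Part 0 n r"
    by (rule base_id[OF D q j e]) (auto simp: hL_def)
  then show ?case using q by simp
next
  case (Suc d)
  have req: "equiv (points 0 n) r" using cat_equiv[OF D q] .
  have IH: "Part 0 n (relrel n (hL j d) r) \<in> D" using Suc by (simp add: relab_rr)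
  have ee: "(L (j - Suc d + 1), L (j - Suc d + 2)) \<in> relrel n (hL j d) r"
    using Suc.prems j rrefl[OF req, of j] by (auto simp: relrel_def hL_def)
  have "relab n (\<lambda>c. if c = j - Suc d \<or> c = j - Suc d + 1 then j - Suc d + 1
      else if c = j - Suc d + 2 then j - Suc d else c) (relrel n (hL j d) r) \<in> D"
    by (rule op_mvL[OF D rho IH _ ee]) (use Suc.prems j in auto)
  also have "relab n (\<lambda>c. if c = j - Suc d \<or> c = j - Suc d + 1 then j - Suc d + 1
      else if c = j - Suc d + 2 then j - Suc d else c) (relrel n (hL j d) r) = relab n (hL j (Suc d)) r"
    apply (subst relab_relab)
    using Suc.prems j apply (auto)[1]
    apply (rule relab_cong)
    using Suc.prems j by (auto simp: hL_def)
  finally show ?case .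
qed

lemma mvR_many:
  assumes D: "category D" and rho: "pair_positioner \<in> D" and q: "Part 0 n r \<in> D"
    and e: "(L j, L (j+1)) \<in> r"
  shows "j + d + 1 < n \<Longrightarrow> relab n (hR j d) r \<in> D"
proof (induction d)
  case 0
  have "relab n (hR j 0) r = Part 0 n r"
    by (rule base_id[OF D q _ e]) (use 0 in \<open>auto simp: hR_def\<close>)
  then show ?case using q by simp
next
  case (Suc d)
  have req: "equiv (points 0 n) r" using cat_equiv[OF D q] .
  have IH: "Part 0 n (relrel n (hR j d) r) \<in> D" using Suc by (simp add: relab_rr)
  have ee: "(L (j + d), L (j + d + 1)) \<in> relrel n (hR j d) r"
    using Suc.prems rrefl[OF req, of j] by (auto simp: relrel_def hR_def)
  have "relab n (\<lambda>c. if c = j + d then j + d + 2 else if c = j + d + 1 \<or> c = j + d + 2 then j + d else c)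
     (relrel n (hR j d) r) \<in> D"
    by (rule op_mvR[OF D rho IH _ ee]) (use Suc.prems in auto)
  also have "relab n (\<lambda>c. if c = j + d then j + d + 2 else if c = j + d + 1 \<or> c = j + d + 2 then j + d else c)
     (relrel n (hR j d) r) = relab n (hR j (Suc d)) r"
    apply (subst relab_relab)
    using Suc.prems apply (auto)[1]
    apply (rule relab_cong)
    using Suc.prems by (auto simp: hR_def)
  finally show ?case .
qed


lemma not_sl:
  assumes "\<not> single_leg (Part 0 n r)"
  obtains i where "i + 1 < n" "(L (i+1), L i) \<in> r"
proof -
  from assms obtain t where t: "Suc t < n" "(L (rev [0..<n] ! t), L (rev [0..<n] ! Suc t)) \<in> r"
    by (auto simp: reading_def)
  then have "(L (n - Suc t), L (n - Suc (Suc t))) \<in> r" by (simp add: rev_nth)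
  moreover have "n - Suc t = (n - Suc (Suc t)) + 1" using t by simp
  ultimately show ?thesis using that[of "n - Suc (Suc t)"] t by auto
qed

lemma SS2: "2 \<le> c \<Longrightarrow> Suc (Suc (c - 2)) = (c::nat)" by arith

lemma main0:
  assumes C: "category C" and G: "category G" and rho: "pair_positioner \<in> G"
    and sl: "sl_part C \<subseteq> G"
  shows "Part 0 n r \<in> C \<Longrightarrow> Part 0 n r \<in> G"
proof (induction n arbitrary: r rule: less_induct)
  case (less n r)
  show ?case
  proof (cases "single_leg (Part 0 n r)")
    case True then show ?thesis using less.prems sl by (auto simp: sl_part_def)
  next
    case False
    then obtain i where i: "i + 1 < n" and e0: "(L (i+1), L i) \<in> r" by (rule not_sl)
    have req: "equiv (points 0 n) r" using cat_equiv[OF C less.prems] .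
    have tr: "trans r" using req by (simp add: equiv_def)
    have e: "(L i, L (i+1)) \<in> r" using rsym[OF req e0] .
    define g where "g = (\<lambda>c::nat. if c < i then c else c + 2)"
    define r' where "r' = relrel (n - 2) g r"
    have q'C: "Part 0 (n-2) r' \<in> C"
      using op_cap[OF C less.prems i e] by (simp add: relab_rr r'_def g_def)
    have q'G: "Part 0 (n-2) r' \<in> G" using less.IH[OF _ q'C] i by simp
    have r'eq: "equiv (points 0 (n-2)) r'" using cat_equiv[OF G q'G] .
    have r'_iff: "(L p, L p') \<in> r' \<longleftrightarrow> p < n - 2 \<and> p' < n - 2 \<and> (L (g p), L (g p')) \<in> r" for p p'
      by (auto simp: r'_def relrel_def)
    show ?thesis
    proof (cases "\<forall>b<n. (L i, L b) \<in> r \<longrightarrow> b = i \<or> b = i + 1")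
      case True
      define s where "s = r' \<union> map_rel (shift_pt 0 (n-2)) ({L 0, L 1} \<times> {L 0, L 1})"
      have nn: "Suc (Suc (n - 2)) = n" using i by arith
      have tG: "Part 0 n s \<in> G"
        using catD(4)[OF G q'G catD(2)[OF G]] i
        by (simp add: pair_part_def of_blocks_def s_def nn)
      have s_iff: "(L p, L p') \<in> s \<longleftrightarrow> (p < n - 2 \<and> p' < n - 2 \<and> (L (g p), L (g p')) \<in> r)
          \<or> (p \<in> {n-2, n-1} \<and> p' \<in> {n-2, n-1})" for p p'
        using i by (auto simp: s_def r'_iff map_rel_def)
      have es: "(L (n-2), L (n-2+1)) \<in> s" using i by (simp add: s_iff)
      have "relab n (hL (n-2) (n-2-i)) s \<in> G"
        by (rule mvL_many[OF G rho tG _ es]) (use i in auto)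
      moreover have "relab n (hL (n-2) (n-2-i)) s = Part 0 n r"
        unfolding relab_def
      proof (rule arg_cong[where f="Part 0 n"], intro set_eqI iffI)
        have sub: "r \<subseteq> points 0 n \<times> points 0 n" using equiv_type[OF req] .
        have blk: "b = i \<or> b = i + 1" if "(L c, L b) \<in> r" "c = i \<or> c = i + 1" "b < n" for c b
        proof -
          have "(L i, L b) \<in> r" using that e tr by (auto dest: transD)
          then show ?thesis using True that by auto
        qed
        have key: "(L (hL (n-2) (n-2-i) a), L (hL (n-2) (n-2-i) b)) \<in> s \<longleftrightarrow> (L a, L b) \<in> r"
          if ab: "a < n" "b < n" for a b
        proof -
          have hv: "hL (n-2) (n-2-i) c = (if c < i then c else if c \<le> i + 1 then n - 2 else c - 2)"
            if "c < n" for c using that i by (auto simp: hL_def)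
          have gh: "c \<noteq> i \<Longrightarrow> c \<noteq> i+1 \<Longrightarrow> c < n \<Longrightarrow> hL (n-2) (n-2-i) c < n - 2 \<and> g (hL (n-2) (n-2-i) c) = c" for c
            using hv[of c] i by (auto simp: g_def)
          consider "a \<in> {i, i+1}" "b \<in> {i, i+1}" | "a \<in> {i, i+1}" "b \<notin> {i, i+1}"
            | "a \<notin> {i, i+1}" "b \<in> {i, i+1}" | "a \<notin> {i, i+1}" "b \<notin> {i, i+1}" by blast
          then show ?thesis
          proof cases
            case 1
            then have "(L a, L b) \<in> r" using e e0 rrefl[OF req, of i] rrefl[OF req, of "i+1"] i by auto
            then show ?thesis using 1 hv ab i by (auto simp: s_iff)
          next
            case 2
            have "(L a, L b) \<notin> r" using blk[of a b] 2 ab by auto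
            moreover have "hL (n-2) (n-2-i) b < n - 2" using gh[of b] 2 ab by auto
            ultimately show ?thesis using 2 hv ab i by (auto simp: s_iff)
          next
            case 3
            have "(L a, L b) \<notin> r" using blk[of b a] 3 ab rsym[OF req] by blast
            moreover have "hL (n-2) (n-2-i) a < n - 2" using gh[of a] 3 ab by auto
            ultimately show ?thesis using 3 hv ab i by (auto simp: s_iff)
          next
            case 4
            then show ?thesis using gh[of a] gh[of b] ab by (auto simp: s_iff)
          qed
        qed
        fix xy
        show "xy \<in> {(L a, L b) |a b. a < n \<and> b < n \<and> (L (hL (n-2) (n-2-i) a), L (hL (n-2) (n-2-i) b)) \<in> s} \<Longrightarrow> xy \<in> r"
          using key by auto
        assume xy: "xy \<in> r"
        then obtain a b where ab: "xy = (L a, L b)" "a < n" "b < n" using sub by (auto simp: points0)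
        then show "xy \<in> {(L a, L b) |a b. a < n \<and> b < n \<and> (L (hL (n-2) (n-2-i) a), L (hL (n-2) (n-2-i) b)) \<in> s}"
          using key xy by auto
      qed
      ultimately show ?thesis by simp
    next
      case False
      then obtain x where x: "x < n" "x \<noteq> i" "x \<noteq> i + 1" "(L i, L x) \<in> r" by auto
      have ex1: "(L c, L x) \<in> r" if "c = i \<or> c = i + 1" for c
        using that x(4) e0 tr by (auto dest: transD)
      show ?thesis
      proof (cases "x < i")
        case True
        define tri where "tri = (\<lambda>c. if c < x then c else if c < x + 3 then x else c - 2)"
        have q2: "relab (n - 2 + 2) tri r' \<in> G"
          unfolding tri_def by (rule op_dbl[OF G rho q'G]) (use True i in auto)
        have n2: "n - 2 + 2 = n" using i by simp
        have q2': "Part 0 n (relrel n tri r') \<in> G" using q2 n2 by (simp add: relab_rr)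
        have e2: "(L (x+1), L (x+1+1)) \<in> relrel n tri r'"
          using rrefl[OF r'eq, of x] True i by (auto simp: relrel_def tri_def)
        have "relab n (hR (x+1) (i - x - 1)) (relrel n tri r') \<in> G"
          by (rule mvR_many[OF G rho q2' e2]) (use True i in auto)
        also have "relab n (hR (x+1) (i - x - 1)) (relrel n tri r') = relab n (g \<circ> (tri \<circ> hR (x+1) (i - x - 1))) r"
          unfolding r'_def
          apply (subst relab_relab)
           apply (use True i in \<open>auto simp: hR_def\<close>)[1]
          apply (subst relab_relab)
           apply (use True i in \<open>auto simp: hR_def tri_def\<close>)[1]
          by simp
        also have "\<dots> = Part 0 n r"
        proof (rule relab_id[OF req])
          fix c assume c: "c < n"
          consider "c < x" | "c = x" | "x < c" "c < i" | "c = i \<or> c = i + 1" | "i + 1 < c" by linarith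
          then show "(g \<circ> (tri \<circ> hR (x+1) (i - x - 1))) c < n \<and> (L c, L ((g \<circ> (tri \<circ> hR (x+1) (i - x - 1))) c)) \<in> r"
          proof cases
            case 4
            then have "(g \<circ> (tri \<circ> hR (x+1) (i - x - 1))) c = x"
              using True by (auto simp: g_def tri_def hR_def)
            then show ?thesis using ex1[OF 4] x by simp
          qed (use True c rrefl[OF req, of c] in \<open>auto simp: g_def tri_def hR_def SS2\<close>)
        qed
        finally show ?thesis .
      next
        case False
        then have xi: "i + 2 \<le> x" using x by auto
        define x' where "x' = x - 2"
        define tri where "tri = (\<lambda>c. if c < x' then c else if c < x' + 3 then x' else c - 2)"
        have q2: "relab (n - 2 + 2) tri r' \<in> G"
          unfolding tri_def by (rule op_dbl[OF G rho q'G]) (use xi x in \<open>auto simp: x'_def\<close>)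
        have n2: "n - 2 + 2 = n" using i by simp
        have q2': "Part 0 n (relrel n tri r') \<in> G" using q2 n2 by (simp add: relab_rr)
        have e2: "(L x', L (x'+1)) \<in> relrel n tri r'"
          using rrefl[OF r'eq, of x'] xi x by (auto simp: relrel_def tri_def x'_def)
        have "relab n (hL x' (x' - i)) (relrel n tri r') \<in> G"
          by (rule mvL_many[OF G rho q2' _ e2]) (use xi x in \<open>auto simp: x'_def\<close>)
        also have "relab n (hL x' (x' - i)) (relrel n tri r') = relab n (g \<circ> (tri \<circ> hL x' (x' - i))) r"
          unfolding r'_def
          apply (subst relab_relab)
           apply (use xi x i in \<open>auto simp: hL_def x'_def\<close>)[1]
          apply (subst relab_relab)
           apply (use xi x i in \<open>auto simp: hL_def tri_def x'_def\<close>)[1]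
          by simp
        also have "\<dots> = Part 0 n r"
        proof (rule relab_id[OF req])
          fix c assume c: "c < n"
          consider "c < i" | "c = i \<or> c = i + 1" | "i + 1 < c" "c < x" | "c = x" | "x < c" by linarith
          then show "(g \<circ> (tri \<circ> hL x' (x' - i))) c < n \<and> (L c, L ((g \<circ> (tri \<circ> hL x' (x' - i))) c)) \<in> r"
          proof cases
            case 2
            then have "(g \<circ> (tri \<circ> hL x' (x' - i))) c = x"
              using xi by (auto simp: g_def tri_def hL_def x'_def)
            then show ?thesis using ex1[OF 2] x by simp
          qed (use xi c rrefl[OF req, of c] in \<open>auto simp: g_def tri_def hL_def x'_def SS2\<close>)
        qed
        finally show ?thesis .
      qed
    qed
  qed
qed




lemma rot_back:
  assumes p: "Part k l r \<in> Pall" and k: "k \<ge> 1"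
  shows "rotRL (rotRU (Part k l r)) = Part k l r"
proof -
  have sub: "r \<subseteq> points k l \<times> points k l" using equiv_type[OF Pall_equiv[OF p]] .
  have inv: "rotRL_pt (k-1) (l+1) (rotRU_pt k l x) = x" if "x \<in> points k l" for x
    using that k by (auto simp: points_def)
  have "map_rel (rotRL_pt (k-1) (l+1)) (map_rel (rotRU_pt k l) r) = r"
  proof -
    have "map_rel (rotRL_pt (k-1) (l+1)) (map_rel (rotRU_pt k l) r)
       = (\<lambda>(a, b). (rotRL_pt (k-1) (l+1) (rotRU_pt k l a), rotRL_pt (k-1) (l+1) (rotRU_pt k l b))) ` r"
      unfolding map_rel_def image_image by (simp add: case_prod_beta)
    also have "\<dots> = (\<lambda>x. x) ` r"
      by (rule image_cong[OF refl]) (use sub inv in auto)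
    finally show ?thesis by simp
  qed
  then show ?thesis using k by simp
qed

lemma all_in:
  assumes C: "category C" and G: "category G" and rho: "pair_positioner \<in> G"
    and sl: "sl_part C \<subseteq> G"
  shows "Part k l r \<in> C \<Longrightarrow> Part k l r \<in> G"
proof (induction k arbitrary: l r)
  case 0 then show ?case using main0[OF C G rho sl] by simp
next
  case (Suc k)
  have p: "Part (Suc k) l r \<in> Pall" using Suc.prems catD(1)[OF C] by auto
  have "rotRU (Part (Suc k) l r) \<in> C" using catD(7)[OF C Suc.prems] by simp
  then have h: "rotRU (Part (Suc k) l r) \<in> G" using Suc.IH by simp
  have "lo (rotRU (Part (Suc k) l r)) \<ge> 1" by simp
  then have "rotRL (rotRU (Part (Suc k) l r)) \<in> G" using catD(8)[OF G h] by blast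
  then show ?case using rot_back[OF p] by simp
qed

lemma categoryI:
  assumes "C \<subseteq> Pall" "pair_part \<in> C" "id_part \<in> C"
    "\<And>a. a \<in> C \<Longrightarrow> involution a \<in> C"
    "\<And>a. a \<in> C \<Longrightarrow> 1 \<le> up a \<Longrightarrow> rotLU a \<in> C \<and> rotRU a \<in> C"
    "\<And>a. a \<in> C \<Longrightarrow> 1 \<le> lo a \<Longrightarrow> rotLL a \<in> C \<and> rotRL a \<in> C"
    "\<And>a b. a \<in> C \<Longrightarrow> b \<in> C \<Longrightarrow> tensor a b \<in> C"
    "\<And>a b. a \<in> C \<Longrightarrow> b \<in> C \<Longrightarrow> lo a = up b \<Longrightarrow> compose a b \<in> C"
  shows "category C"
  unfolding category_def using assms by simp

lemma gen_cat:
  assumes "category C" "X \<subseteq> C" "p \<in> C"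
  shows "category (generated X p)"
proof -
  let ?S = "{D. category D \<and> X \<subseteq> D \<and> p \<in> D}"
  have g: "generated X p = \<Inter> ?S" by (simp add: generated_def)
  have mem: "a \<in> \<Inter> ?S \<longleftrightarrow> (\<forall>D. category D \<longrightarrow> X \<subseteq> D \<longrightarrow> p \<in> D \<longrightarrow> a \<in> D)" for a
    by blast
  show ?thesis unfolding g
  proof (rule categoryI)
    show "\<Inter> ?S \<subseteq> Pall" using assms catD(1)[OF assms(1)] by blast
    show "pair_part \<in> \<Inter> ?S" unfolding mem using catD(2) by blast
    show "id_part \<in> \<Inter> ?S" unfolding mem using catD(3) by blast
    fix a assume a: "a \<in> \<Inter> ?S"
    show "involution a \<in> \<Inter> ?S" using a unfolding mem using catD(6) by blast
    show "1 \<le> up a \<Longrightarrow> rotLU a \<in> \<Inter> ?S \<and> rotRU a \<in> \<Inter> ?S"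
      using a unfolding mem using catD(7,9) by blast
    show "1 \<le> lo a \<Longrightarrow> rotLL a \<in> \<Inter> ?S \<and> rotRL a \<in> \<Inter> ?S"
      using a unfolding mem using catD(8,10) by blast
    fix b assume b: "b \<in> \<Inter> ?S"
    show "tensor a b \<in> \<Inter> ?S" using a b unfolding mem using catD(4) by blast
    show "lo a = up b \<Longrightarrow> compose a b \<in> \<Inter> ?S" using a b unfolding mem using catD(5) by blast
  qed
qed
lemma gen_mono: "X \<subseteq> Y \<Longrightarrow> generated X p \<subseteq> generated Y p"
  unfolding generated_def by blast

lemma part_a:
  assumes "simplifiable_hyperoctahedral C"
  shows "generated (sl_part C) pair_positioner = C"
proof -
  have C: "category C" and rC: "pair_positioner \<in> C" using assms
    by (auto simp: simplifiable_hyperoctahedral_def hyperoctahedral_def)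
  let ?G = "generated (sl_part C) pair_positioner"
  have sub: "sl_part C \<subseteq> C" by (auto simp: sl_part_def)
  have G: "category ?G" by (rule gen_cat[OF C sub rC])
  have GC: "?G \<subseteq> C" unfolding generated_def using C sub rC by blast
  have slG: "sl_part C \<subseteq> ?G" and rG: "pair_positioner \<in> ?G" unfolding generated_def by blast+
  have "C \<subseteq> ?G"
  proof
    fix p assume pC: "p \<in> C"
    obtain k l r where "p = Part k l r" by (cases p)
    then show "p \<in> ?G" using all_in[OF C G rG slG] pC by simp
  qed
  with GC show ?thesis by blast
qed

theorem mainTheorem5:
  assumes "simplifiable_hyperoctahedral C" and "simplifiable_hyperoctahedral D"
  shows "generated (sl_part C) pair_positioner = C \<and>
         (sl_part C = sl_part D \<longleftrightarrow> C = D) \<and>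
         (sl_part C \<subseteq> sl_part D \<longleftrightarrow> C \<subseteq> D)"
proof -
  have a: "generated (sl_part C) pair_positioner = C" using part_a[OF assms(1)] .
  have b: "generated (sl_part D) pair_positioner = D" using part_a[OF assms(2)] .
  have c: "sl_part C \<subseteq> sl_part D \<longleftrightarrow> C \<subseteq> D"
  proof
    assume "sl_part C \<subseteq> sl_part D"
    then show "C \<subseteq> D" using gen_mono a b by metis
  next
    assume "C \<subseteq> D" then show "sl_part C \<subseteq> sl_part D" by (auto simp: sl_part_def)
  qed
  have c': "sl_part D \<subseteq> sl_part C \<longleftrightarrow> D \<subseteq> C"
  proof
    assume "sl_part D \<subseteq> sl_part C"
    then show "D \<subseteq> C" using gen_mono a b by metis
  next
    assume "D \<subseteq> C" then show "sl_part D \<subseteq> sl_part C" by (auto simp: sl_part_def)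
  qed
  show ?thesis using a c c' by blast
qed

end
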